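(* For every integer $k\ge1$ and $\tau\in T$: if $\mathfrak{h}_s(\tau)=k$ then $\rho(\tau)\ge k-\frac12$; if $\mathfrak{r}_s(\tau)=k$ then $\rho(\tau)\ge\frac32k-1$; if $\mathfrak{d}_s(\tau)=k$ then $\rho(\tau)\ge\frac34 2^k-1$. The same holds for $u\in U_f$ with $\mathfrak{h}_s',\mathfrak{r}_s',\mathfrak{d}_s'$ in place of $\mathfrak{h}_s,\mathfrak{r}_s,\mathfrak{d}_s$.
   Context: Let $m\ge0$. $T$: the empty tree $\emptyset$ and all $\tau=[\tau_1,\dots,\tau_\kappa]_l$ with $l\in\{0,\dots,m\}$, $\kappa\ge0$, $\tau_j\in T\setminus\{\emptyset\}$ unordered (new root of color $l$ joined to roots of the $\tau_j$; $\bullet_l$ if $\kappa=0$). Order: $\rho(\emptyset)=0$, $\rho([\tau_1,\dots,\tau_\kappa]_l)=\sum_j\rho(\tau_j)+1$ if $l=0$, $+\frac12$ if $l\ge1$. $U_f$: trees $u=[\tau_1,\dots,\tau_\kappa]_f$, $\kappa\ge0$, $\tau_j\in T\setminus\{\emptyset\}$, $\rho(u)=\sum_j\rho(\tau_j)$, $\mathfrak{g}'(u)=\max_j\mathfrak{g}(\tau_j)$. Maxima over empty sets are $0$. $\mathfrak{h}_s(\emptyset)=0$, $\mathfrak{h}_s([\tau_1,\dots,\tau_\kappa]_l)=1$ if $l>0$, $=1+\max_j\mathfrak{h}_s(\tau_j)$ if $l=0$. $\mathfrak{r}_s(\emptyset)=0$, $\mathfrak{r}_s(\bullet_l)=1$;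 for $\tau=[\tau_1,\dots,\tau_\kappa]_l$: $1$ if $l>0$; $\mathfrak{r}_s(\tau_1)$ if $l=0,\kappa=1$; $1+\max_j\mathfrak{r}_s(\tau_j)$ if $l=0,\kappa\ge2$. $\mathfrak{d}_s(\emptyset)=0$, $\mathfrak{d}_s(\bullet_l)=1$; for $\tau=[\tau_1,\dots,\tau_\kappa]_l$: $1$ if $l>0$; with $M=\max_j\mathfrak{d}_s(\tau_j)$, $M$ if $l=0$ and exactly one $i$ has $\mathfrak{d}_s(\tau_i)=M$, and $M+1$ if $l=0$ and at least two indices attain $M$. *)

theory Defs
  imports Main Complex_Main
begin

text \<open>Empty is the empty tree; Node l ts is the tree whose root
has colour l and whose subtrees are the trees in ts (children are unordered in the
paper; all functions below are invariant under permutation of ts).\<close>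
datatype ctree = Empty | Node nat "ctree list"

fun in_T :: "nat \<Rightarrow> ctree \<Rightarrow> bool" where
  "in_T m Empty = True"
| "in_T m (Node l ts) = (l \<le> m \<and> list_all (\<lambda>t. t \<noteq> Empty \<and> in_T m t) ts)"

definition maxl :: "nat list \<Rightarrow> nat" where
  "maxl xs = foldr max xs 0"

fun rho :: "ctree \<Rightarrow> real" where
  "rho Empty = 0"
| "rho (Node l ts) = sum_list (map rho ts) + (if l = 0 then 1 else 1/2)"

fun hs :: "ctree \<Rightarrow> nat" where
  "hs Empty = 0"
| "hs (Node l ts) = (if l > 0 then 1 else 1 + maxl (map hs ts))"

fun rs :: "ctree \<Rightarrow> nat" where
  "rs Empty = 0"
| "rs (Node l ts) =
     (if ts = [] then 1
      else if l > 0 then 1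
      else (case ts of [t] \<Rightarrow> rs t | _ \<Rightarrow> 1 + maxl (map rs ts)))"

fun ds :: "ctree \<Rightarrow> nat" where
  "ds Empty = 0"
| "ds (Node l ts) =
     (if ts = [] then 1
      else if l > 0 then 1
      else if length (filter (\<lambda>x. x = maxl (map ds ts)) (map ds ts)) = 1
           then maxl (map ds ts)
      else maxl (map ds ts) + 1)"

text \<open>Trees in U_f: u = [t_1,...,t_k]_f, represented by the list of its subtrees.\<close>
definition in_Uf :: "nat \<Rightarrow> ctree list \<Rightarrow> bool" where
  "in_Uf m us = list_all (\<lambda>t. t \<noteq> Empty \<and> in_T m t) us"

definition rho_U :: "ctree list \<Rightarrow> real" where
  "rho_U us = sum_list (map rho us)"

definition hs' :: "ctree list \<Rightarrow> nat" where "hs' us = maxl (map hs us)"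
definition rs' :: "ctree list \<Rightarrow> nat" where "rs' us = maxl (map rs us)"
definition ds' :: "ctree list \<Rightarrow> nat" where "ds' us = maxl (map ds us)"

end

theory Submission
  imports Defs
begin

lemma maxl_ge: "x \<in> set xs \<Longrightarrow> x \<le> maxl xs"
  unfolding maxl_def by (induction xs) auto

lemma maxl_in: "xs \<noteq> [] \<Longrightarrow> maxl xs \<in> set xs"
  unfolding maxl_def
proof (induction xs)
  case (Cons a xs) then show ?case by (cases "xs = []") (auto simp: max_def)
qed simp

lemma maxl_nil[simp]: "maxl [] = 0" by (simp add: maxl_def)

lemma rho_nonneg: "rho t \<ge> 0"
proof (induction t)
  case (Node l ts) then show ?case by (auto intro!: sum_list_nonneg add_nonneg_nonneg)
qed simp

lemma rho_nonempty: "t \<noteq> Empty \<Longrightarrow> rho t \<ge> 1/2"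
  by (cases t) (auto intro!: sum_list_nonneg rho_nonneg add_nonneg_nonneg)

lemma sum_ge_elem: "t \<in> set ts \<Longrightarrow> sum_list (map rho ts) \<ge> rho t"
  using sum_list_map_remove1[of t ts rho] sum_list_nonneg[of "map rho (remove1 t ts)"] rho_nonneg
  by auto

lemma sum_ge_count: "(\<And>t. t \<in> set ts \<Longrightarrow> P t \<Longrightarrow> rho t \<ge> c) \<Longrightarrow>
   sum_list (map rho ts) \<ge> c * real (length (filter P ts))"
proof (induction ts)
  case (Cons a ts)
  have ih: "sum_list (map rho ts) \<ge> c * real (length (filter P ts))" using Cons by auto
  show ?case using rho_nonneg[of a] ih Cons.prems[of a] by (auto simp: algebra_simps)
qed simp

lemma hs_bound: "rho t \<ge> real (hs t) - 1/2"
proof (induction t)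
  case (Node l ts)
  show ?case
  proof (cases "l > 0 \<or> ts = []")
    case True then show ?thesis using rho_nonneg
      by (auto intro!: sum_list_nonneg add_nonneg_nonneg)
  next
    case False
    then have l: "l = 0" and ne: "ts \<noteq> []" by auto
    obtain t0 where t0: "t0 \<in> set ts" "hs t0 = maxl (map hs ts)"
      using maxl_in[of "map hs ts"] ne by auto
    have "rho t0 \<ge> real (hs t0) - 1/2" using Node.IH[OF t0(1)] .
    moreover have "sum_list (map rho ts) \<ge> rho t0" using sum_ge_elem t0 by auto
    ultimately show ?thesis using l t0 by simp
  qed
qed simp

lemma rs_bound: "in_T m t \<Longrightarrow> rho t \<ge> 3/2 * real (rs t) - 1"
proof (induction t)
  case (Node l ts)
  show ?case
  proof (cases "l > 0 \<or> ts = []")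
    case True then show ?thesis using rho_nonneg
      by (auto intro!: sum_list_nonneg add_nonneg_nonneg)
  next
    case False
    then have l: "l = 0" and ne: "ts \<noteq> []" by auto
    have ch: "\<And>t. t \<in> set ts \<Longrightarrow> t \<noteq> Empty \<and> in_T m t" using Node.prems by (auto simp: list_all_iff)
    show ?thesis
    proof (cases "length ts = 1")
      case True
      then obtain a where a: "ts = [a]" by (cases ts) auto
      have "rho a \<ge> 3/2 * real (rs a) - 1" using Node.IH ch a by auto
      then show ?thesis using a l by simp
    next
      case False
      then obtain a b r where abr: "ts = a # b # r" using ne by (cases ts rule: remdups_adj.cases) auto
      have rsv: "rs (Node l ts) = 1 + maxl (map rs ts)" using abr l by simp
      obtain t0 where t0: "t0 \<in> set ts" "rs t0 = maxl (map rs ts)"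
        using maxl_in[of "map rs ts"] ne by auto
      have i0: "rho t0 \<ge> 3/2 * real (rs t0) - 1" using Node.IH[OF t0(1)] ch[OF t0(1)] by auto
      have "length (remove1 t0 ts) \<ge> 1" using abr t0 by (simp add: length_remove1)
      then obtain t1 where t1: "t1 \<in> set (remove1 t0 ts)" by (cases "remove1 t0 ts") auto
      have "t1 \<in> set ts" using t1 notin_set_remove1 by fastforce
      then have "rho t1 \<ge> 1/2" using ch rho_nonempty by auto
      then have "sum_list (map rho (remove1 t0 ts)) \<ge> 1/2" using sum_ge_elem[OF t1] by auto
      then have "sum_list (map rho ts) \<ge> rho t0 + 1/2" using sum_list_map_remove1[OF t0(1), of rho] by auto
      then show ?thesis using rsv i0 t0 l by simp
    qed
  qed
qed simp

lemma ds_bound: "in_T m t \<Longrightarrow> rho t \<ge> 3/4 * 2 ^ (ds t) - 1"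
proof (induction t)
  case (Node l ts)
  show ?case
  proof (cases "l > 0 \<or> ts = []")
    case True then show ?thesis using rho_nonneg
      by (auto intro!: sum_list_nonneg add_nonneg_nonneg)
  next
    case False
    then have l: "l = 0" and ne: "ts \<noteq> []" by auto
    have ch: "\<And>t. t \<in> set ts \<Longrightarrow> t \<noteq> Empty \<and> in_T m t" using Node.prems by (auto simp: list_all_iff)
    define M where "M = maxl (map ds ts)"
    obtain t0 where t0: "t0 \<in> set ts" "ds t0 = M"
      using maxl_in[of "map ds ts"] ne M_def by auto
    have i0: "rho t0 \<ge> 3/4 * 2 ^ M - 1" using Node.IH ch t0 by auto
    have sg: "sum_list (map rho ts) \<ge> rho t0" using sum_ge_elem t0 by auto
    have cnt: "length (filter (\<lambda>x. x = M) (map ds ts)) = length (filter (\<lambda>t. ds t = M) ts)"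
      by (simp add: filter_map o_def)
    have cpos: "length (filter (\<lambda>t. ds t = M) ts) \<ge> 1"
      using t0 by (metis (mono_tags, lifting) One_nat_def Suc_leI filter_empty_conv length_greater_0_conv)
    show ?thesis
    proof (cases "length (filter (\<lambda>t. ds t = M) ts) = 1")
      case True
      then have "ds (Node l ts) = M" using l ne cnt M_def by simp
      then show ?thesis using i0 sg l by simp
    next
      case False
      then have dv: "ds (Node l ts) = M + 1" using l ne cnt M_def by simp
      show ?thesis
      proof (cases "M = 0")
        case True
        have "sum_list (map rho ts) \<ge> 0" by (rule sum_list_nonneg) (use rho_nonneg in auto)
        then show ?thesis using dv l True by simp
      next
        case False
        have "(2::real) ^ M \<ge> 2" using False by (metis One_nat_def Suc_leI neq0_conv power_increasing power_one_right one_le_numeral)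
        then have cp: "3/4 * 2 ^ M - 1 \<ge> (0::real)" by simp
        have c2: "length (filter (\<lambda>t. ds t = M) ts) \<ge> 2" using cpos \<open>length _ \<noteq> 1\<close> by linarith
        have "sum_list (map rho ts) \<ge> (3/4 * 2 ^ M - 1) * real (length (filter (\<lambda>t. ds t = M) ts))"
          by (rule sum_ge_count) (use Node.IH ch in auto)
        moreover have "(3/4 * 2 ^ M - 1) * real (length (filter (\<lambda>t. ds t = M) ts)) \<ge> (3/4 * 2 ^ M - 1) * 2"
          using cp c2 by (intro mult_left_mono) auto
        ultimately show ?thesis using dv l by simp
      qed
    qed
  qed
qed simp

lemma U_bound: assumes "f u = maxl (map g u)" "f u \<ge> 1"
  shows "\<exists>t\<in>set u. g t = f u \<and> sum_list (map rho u) \<ge> rho t"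
proof -
  have "u \<noteq> []" using assms by auto
  then show ?thesis using maxl_in[of "map g u"] assms sum_ge_elem by auto
qed

theorem mainTheorem9:
  fixes m k :: nat and t :: ctree and u :: "ctree list"
  assumes "k \<ge> 1" and "in_T m t" and "in_Uf m u"
  shows "(hs t = k \<longrightarrow> rho t \<ge> real k - 1/2)
       \<and> (rs t = k \<longrightarrow> rho t \<ge> 3/2 * real k - 1)
       \<and> (ds t = k \<longrightarrow> rho t \<ge> 3/4 * 2 ^ k - 1)
       \<and> (hs' u = k \<longrightarrow> rho_U u \<ge> real k - 1/2)
       \<and> (rs' u = k \<longrightarrow> rho_U u \<ge> 3/2 * real k - 1)
       \<and> (ds' u = k \<longrightarrow> rho_U u \<ge> 3/4 * 2 ^ k - 1)"
proof (intro conjI impI)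
  have ch: "\<And>t. t \<in> set u \<Longrightarrow> in_T m t" using assms(3) by (auto simp: in_Uf_def list_all_iff)
  show "hs t = k \<Longrightarrow> rho t \<ge> real k - 1/2" using hs_bound by auto
  show "rs t = k \<Longrightarrow> rho t \<ge> 3/2 * real k - 1" using rs_bound assms by auto
  show "ds t = k \<Longrightarrow> rho t \<ge> 3/4 * 2 ^ k - 1" using ds_bound assms by auto
  show "hs' u = k \<Longrightarrow> rho_U u \<ge> real k - 1/2"
  proof -
    assume h: "hs' u = k"
    obtain t0 where "t0 \<in> set u" "hs t0 = k" "rho_U u \<ge> rho t0"
      using U_bound[of hs' u hs] h assms(1) by (auto simp: hs'_def rho_U_def)
    then show ?thesis using hs_bound[of t0] by auto
  qed
  show "rs' u = k \<Longrightarrow> rho_U u \<ge> 3/2 * real k - 1"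
  proof -
    assume h: "rs' u = k"
    obtain t0 where "t0 \<in> set u" "rs t0 = k" "rho_U u \<ge> rho t0"
      using U_bound[of rs' u rs] h assms(1) by (auto simp: rs'_def rho_U_def)
    then show ?thesis using rs_bound[of m t0] ch by fastforce
  qed
  show "ds' u = k \<Longrightarrow> rho_U u \<ge> 3/4 * 2 ^ k - 1"
  proof -
    assume h: "ds' u = k"
    obtain t0 where "t0 \<in> set u" "ds t0 = k" "rho_U u \<ge> rho t0"
      using U_bound[of ds' u ds] h assms(1) by (auto simp: ds'_def rho_U_def)
    then show ?thesis using ds_bound[of m t0] ch by fastforce
  qed
qed

end
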